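(* Let $(N,v)$ be a TU game with $\Pi(v)=\emptyset$, and let $\delta>0$ be such that every value $v(S)$, $S\subseteq N$, is an integer multiple of $\delta$. Following the Coalition Proposal algorithm (described in the context) for $(N,v)$ with step $\delta$, starting from any environment state $(\mathbf{a},\mathcal{C})\in\Omega(v)$ whose aspirations are integer multiples of $\delta$, the environment state never converges (it never reaches a state from which it remains unchanged forever).
   Context: A TU game is a pair $(N,v)$ with $N=\{1,\dots,n\}$ and $v:2^N\to\mathbb{R}$, $v(\emptyset)=0$. $\mathcal{P}(N)$ denotes the set of partitions of $N$. A core solution is a pair $(\mathbf{x},\rho)$ with $\mathbf{x}\in\mathbb{R}^n$, $\rho\in\mathcal{P}(N)$, such that $\sum_{i\in S}x_i\ge v(S)$ for all $S\subseteq N$ and $\sum_{i\in S}x_i=v(S)$ for all $S\in\rho$; $\Pi(v)$ is the set of core solutions. Coalition Proposal algorithm with step $\delta$: each player $i$ holds an aspiration $a_i$ and a coalition state $C_i\subseteq N$. In each iteration: a player $i\in N$ is activated at random; $i$ chooses at random a set $S\subseteq N\setminus\{i\}$ and proposes $J=S\cup\{i\}$ (random choices independent across iterations, every player and every subset having positive probability). If $\sum_{j\in J}a_j+\delta\le v(J)$ (success): $a_i\leftarrow a_i+\delta$; then for every $j\in J$ and every $k\in C_j$ with $k\neq j$, set $C_k\leftarrow\emptyset$; then set $C_j\leftarrow J$ for all $j\in J$. Otherwise (failure): if $C_i=\emptyset$, set $a_i\leftarrow\max(v(\{i\}),a_i-\delta)$. Finally, if $a_i=v(\{i\})$ and $C_i=\emptyset$,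 set $C_i\leftarrow\{i\}$. The environment state is $(\mathbf{a},\mathcal{C})$ with $\mathbf{a}=(a_1,\dots,a_n)$ and $\mathcal{C}=\{C_i:i\in N\}$ the set of (nonempty) formed coalitions. A feasible environment state is a pair $(\mathbf{a},\mathcal{C})$ with $\mathbf{a}\in\mathbb{R}^n$ and $\mathcal{C}$ a set of pairwise disjoint subsets of $N$ such that $a_i\ge v(\{i\})$ for all $i\in N$ and $\sum_{i\in S}a_i\le v(S)$ for all $S\in\mathcal{C}$. $\Omega(v)$ is the set of feasible environment states. *)

theory Defs
  imports Complex_Main "HOL-Library.FuncSet"
begin

definition is_partition :: "'a set \<Rightarrow> 'a set set \<Rightarrow> bool" where
  "is_partition N \<rho> \<longleftrightarrow> (\<forall>S\<in>\<rho>. S \<noteq> {} \<and> S \<subseteq> N) \<and> \<Union>\<rho> = N \<and>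
     (\<forall>S\<in>\<rho>. \<forall>T\<in>\<rho>. S \<noteq> T \<longrightarrow> S \<inter> T = {})"

definition core_solutions :: "'a set \<Rightarrow> ('a set \<Rightarrow> real) \<Rightarrow> (('a \<Rightarrow> real) \<times> 'a set set) set" where
  "core_solutions N v = {(x, \<rho>). x \<in> N \<rightarrow>\<^sub>E UNIV \<and> is_partition N \<rho> \<and>
      (\<forall>S. S \<subseteq> N \<longrightarrow> (\<Sum>i\<in>S. x i) \<ge> v S) \<and> (\<forall>S\<in>\<rho>. (\<Sum>i\<in>S. x i) = v S)}"

definition feasible_states :: "'a set \<Rightarrow> ('a set \<Rightarrow> real) \<Rightarrow> (('a \<Rightarrow> real) \<times> 'a set set) set" where
  "feasible_states N v = {(a, \<C>). (\<forall>S\<in>\<C>. S \<subseteq> N) \<and>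
      (\<forall>S\<in>\<C>. \<forall>T\<in>\<C>. S \<noteq> T \<longrightarrow> S \<inter> T = {}) \<and>
      (\<forall>i\<in>N. a i \<ge> v {i}) \<and> (\<forall>S\<in>\<C>. (\<Sum>i\<in>S. a i) \<le> v S)}"

text \<open>Internal algorithm state: aspirations a and per-player coalition states C i.\<close>
type_synonym 'a cp_state = "('a \<Rightarrow> real) \<times> ('a \<Rightarrow> 'a set)"

definition coalition_of :: "'a set set \<Rightarrow> 'a \<Rightarrow> 'a set" where
  "coalition_of \<C> i = (if \<exists>S\<in>\<C>. i \<in> S then (THE S. S \<in> \<C> \<and> i \<in> S) else {})"

definition env_state :: "'a set \<Rightarrow> 'a cp_state \<Rightarrow> ('a \<Rightarrow> real) \<times> 'a set set" where
  "env_state N s = (restrict (fst s) N, {snd s i | i. i \<in> N \<and> snd s i \<noteq> {}})"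

text \<open>One iteration of the Coalition Proposal algorithm with step \<delta>, when player i
  is activated and proposes J = S \<union> {i}.\<close>
definition cp_step :: "('a set \<Rightarrow> real) \<Rightarrow> real \<Rightarrow> 'a cp_state \<Rightarrow> 'a \<Rightarrow> 'a set \<Rightarrow> 'a cp_state" where
  "cp_step v \<delta> s i S =
    (let a = fst s; C = snd s; J = insert i S;
         (a', C') =
           (if (\<Sum>j\<in>J. a j) + \<delta> \<le> v J then
              (let a1 = a(i := a i + \<delta>);
                   K = {k. \<exists>j\<in>J. k \<in> C j \<and> k \<noteq> j};
                   C1 = (\<lambda>k. if k \<in> K then {} else C k);
                   C2 = (\<lambda>k. if k \<in> J then J else C1 k)
               in (a1, C2))
            else
              (if C i = {} then (a(i := max (v {i}) (a i - \<delta>)), C) else (a, C)))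
     in (a', if a' i = v {i} \<and> C' i = {} then C'(i := {i}) else C'))"

definition cp_move :: "'a set \<Rightarrow> ('a set \<Rightarrow> real) \<Rightarrow> real \<Rightarrow> 'a cp_state \<Rightarrow> 'a cp_state \<Rightarrow> bool" where
  "cp_move N v \<delta> s s' \<longleftrightarrow> (\<exists>i\<in>N. \<exists>S. S \<subseteq> N - {i} \<and> s' = cp_step v \<delta> s i S)"

text \<open>A state from which the environment state remains unchanged forever,
  whatever random choices are made (absorbing state).\<close>
definition cp_absorbing :: "'a set \<Rightarrow> ('a set \<Rightarrow> real) \<Rightarrow> real \<Rightarrow> 'a cp_state \<Rightarrow> bool" where
  "cp_absorbing N v \<delta> s \<longleftrightarrow>
     (\<forall>s'. (cp_move N v \<delta>)\<^sup>*\<^sup>* s s' \<longrightarrow> env_state N s' = env_state N s)"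

end

theory Submission
  imports Defs
begin

lemma step_succ:
  assumes "(\<Sum>j\<in>insert i S. a j) + \<delta> \<le> v (insert i S)"
  shows "fst (cp_step v \<delta> (a, C) i S) = a(i := a i + \<delta>)"
   "snd (cp_step v \<delta> (a, C) i S) k = (if k \<in> insert i S then insert i S else if (\<exists>j\<in>insert i S. k \<in> C j \<and> k \<noteq> j) then {} else C k)"
  using assms by (simp_all add: cp_step_def Let_def)
lemma step_fail:
  assumes "\<not> (\<Sum>j\<in>insert i S. a j) + \<delta> \<le> v (insert i S)"
  shows "cp_step v \<delta> (a, C) i S = (let a' = (if C i = {} then a(i := max (v {i}) (a i - \<delta>)) else a) in
     (a', if a' i = v {i} \<and> C i = {} then C(i := {i}) else C))"
  using assms by (auto simp add: cp_step_def Let_def max_def)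

definition cp_inv :: "'a set \<Rightarrow> ('a set \<Rightarrow> real) \<Rightarrow> real \<Rightarrow> 'a cp_state \<Rightarrow> bool" where
 "cp_inv N v \<delta> s \<longleftrightarrow> (\<forall>k. snd s k \<subseteq> N) \<and> (\<forall>k. snd s k \<noteq> {} \<longrightarrow> k \<in> snd s k)
   \<and> (\<forall>j k. k \<in> snd s j \<longrightarrow> snd s k = snd s j)
   \<and> (\<forall>k. snd s k \<noteq> {} \<longrightarrow> (\<Sum>x\<in>snd s k. fst s x) \<le> v (snd s k))
   \<and> (\<forall>i\<in>N. \<exists>m::int. fst s i = of_int m * \<delta>)"

lemma inv_step:
  assumes fin: "finite N" and vm: "\<forall>S. S \<subseteq> N \<longrightarrow> (\<exists>k::int. v S = of_int k * \<delta>)"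
    and inv: "cp_inv N v \<delta> (a, C)" and i: "i \<in> N" and S: "S \<subseteq> N - {i}"
  shows "cp_inv N v \<delta> (cp_step v \<delta> (a, C) i S)"
proof -
  have I0: "\<And>k. C k \<subseteq> N" and I1: "\<And>k. C k \<noteq> {} \<Longrightarrow> k \<in> C k"
    and I2: "\<And>j k. k \<in> C j \<Longrightarrow> C k = C j"
    and I3: "\<And>k. C k \<noteq> {} \<Longrightarrow> (\<Sum>x\<in>C k. a x) \<le> v (C k)"
    and I4: "\<And>i. i \<in> N \<Longrightarrow> \<exists>m::int. a i = of_int m * \<delta>"
    using inv unfolding cp_inv_def by auto
  have I1': "\<And>k x. x \<in> C k \<Longrightarrow> k \<in> C k" using I1 by blast
  define J where "J = insert i S"
  have JN: "J \<subseteq> N" using S i J_def by auto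
  have finJ: "finite J" using JN fin finite_subset by blast
  have iJ: "i \<in> J" using J_def by auto
  show ?thesis
  proof (cases "(\<Sum>j\<in>J. a j) + \<delta> \<le> v J")
    case True
    define a' where "a' = a(i := a i + \<delta>)"
    define C' where "C' = (\<lambda>k. if k \<in> J then J else if (\<exists>j\<in>J. k \<in> C j \<and> k \<noteq> j) then {} else C k)"
    have eq: "cp_step v \<delta> (a, C) i S = (a', C')"
    proof (rule prod_eqI)
      show "fst (cp_step v \<delta> (a, C) i S) = fst (a', C')"
        using step_succ(1)[of a i S \<delta> v C] True unfolding a'_def J_def by simp
      show "snd (cp_step v \<delta> (a, C) i S) = snd (a', C')"
        using step_succ(2)[of a i S \<delta> v C] True unfolding C'_def J_def by (simp add: fun_eq_iff)
    qed
    have J0: "C' k \<subseteq> N" for k using I0 JN unfolding C'_def by auto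
    have J1: "C' k \<noteq> {} \<Longrightarrow> k \<in> C' k" for k using I1 unfolding C'_def by (auto split: if_splits)
    have J2: "C' k = C' j" if kj: "k \<in> C' j" for j k
    proof (cases "j \<in> J")
      case True thus ?thesis using kj unfolding C'_def by auto
    next
      case False
      hence jn: "\<not> (\<exists>j'\<in>J. j \<in> C j' \<and> j \<noteq> j')" and kC: "k \<in> C j" and Cj: "C' j = C j"
        using kj unfolding C'_def by (auto split: if_splits)
      have jC: "j \<in> C j" using I1 kC by auto
      have "k \<notin> J"
      proof
        assume "k \<in> J"
        moreover have "j \<in> C k" using I2[OF kC] jC by simp
        ultimately show False using jn False by auto
      qed
      moreover have "\<not> (\<exists>j'\<in>J. k \<in> C j' \<and> k \<noteq> j')"
      proof
        assume "\<exists>j'\<in>J. k \<in> C j' \<and> k \<noteq> j'"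
        then obtain j' where "j' \<in> J" "k \<in> C j'" by auto
        hence "C j = C j'" using I2 kC by metis
        thus False using jC jn False \<open>j' \<in> J\<close> by auto
      qed
      ultimately show ?thesis using Cj I2[OF kC] unfolding C'_def by auto
    qed
    have J3: "(\<Sum>x\<in>C' k. a' x) \<le> v (C' k)" if ne: "C' k \<noteq> {}" for k
    proof (cases "k \<in> J")
      case True
      have "(\<Sum>x\<in>J. a' x) = a' i + (\<Sum>x\<in>J - {i}. a' x)" using sum.remove[OF finJ iJ] by blast
      also have "\<dots> = a i + \<delta> + (\<Sum>x\<in>J - {i}. a x)" unfolding a'_def by (auto intro: sum.cong)
      also have "\<dots> = (\<Sum>x\<in>J. a x) + \<delta>" using sum.remove[OF finJ iJ, of a] by simp
      finally show ?thesis using True \<open>(\<Sum>j\<in>J. a j) + \<delta> \<le> v J\<close> unfolding C'_def by simp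
    next
      case False
      hence nK: "\<not> (\<exists>j\<in>J. k \<in> C j \<and> k \<noteq> j)" and Ck: "C' k = C k" using ne unfolding C'_def
        by (auto split: if_splits)
      have "i \<notin> C k"
      proof
        assume "i \<in> C k"
        hence "C i = C k" using I2 by blast
        moreover have "k \<in> C k" using I1 ne Ck by auto
        ultimately show False using nK iJ False by auto
      qed
      hence "(\<Sum>x\<in>C k. a' x) = (\<Sum>x\<in>C k. a x)" unfolding a'_def by (auto intro: sum.cong)
      thus ?thesis using I3 ne Ck by auto
    qed
    have J4: "\<exists>m::int. a' j = of_int m * \<delta>" if "j \<in> N" for j
    proof (cases "j = i")
      case True
      then obtain m where "a i = of_int m * \<delta>" using I4 i by blast
      hence "a' j = of_int (m + 1) * \<delta>" using True unfolding a'_def by (simp add: algebra_simps)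
      thus ?thesis by blast
    qed (use I4 that a'_def in auto)
    show ?thesis unfolding eq cp_inv_def using J0 J1 J2 J3 J4 by auto
  next
    case False
    define a' where "a' = (if C i = {} then a(i := max (v {i}) (a i - \<delta>)) else a)"
    define C' where "C' = (if a' i = v {i} \<and> C i = {} then C(i := {i}) else C)"
    have eq: "cp_step v \<delta> (a, C) i S = (a', C')"
      using step_fail[of a i S \<delta> v C] False unfolding a'_def C'_def J_def Let_def by simp
    have J0: "C' k \<subseteq> N" for k using I0 i unfolding C'_def by auto
    have J1: "C' k \<noteq> {} \<Longrightarrow> k \<in> C' k" for k using I1' unfolding C'_def by (auto split: if_splits)
    have J2: "C' k = C' j" if kj: "k \<in> C' j" for j k
      using kj I2 I1 unfolding C'_def by (auto split: if_splits)
    have J3: "(\<Sum>x\<in>C' k. a' x) \<le> v (C' k)" if ne: "C' k \<noteq> {}" for k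
    proof (cases "a' i = v {i} \<and> C i = {} \<and> k = i")
      case True thus ?thesis unfolding C'_def by auto
    next
      case F: False
      hence Ck: "C' k = C k" unfolding C'_def by auto
      have "(\<Sum>x\<in>C k. a' x) = (\<Sum>x\<in>C k. a x)"
      proof (cases "C i = {}")
        case True
        have "i \<notin> C k" using I2 True ne Ck by blast
        thus ?thesis unfolding a'_def by (auto intro: sum.cong)
      qed (simp add: a'_def)
      thus ?thesis using I3 ne Ck by auto
    qed
    have J4: "\<exists>m::int. a' j = of_int m * \<delta>" if "j \<in> N" for j
    proof (cases "j = i \<and> C i = {}")
      case True
      then obtain m where m: "a i = of_int m * \<delta>" using I4 i by blast
      obtain n where n: "v {i} = of_int n * \<delta>" using vm i by blast
      have "a' j = max (v {i}) (a i - \<delta>)" using True unfolding a'_def by simp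
      hence "a' j = of_int n * \<delta> \<or> a' j = of_int (m - 1) * \<delta>" using m n
        by (auto simp: max_def algebra_simps)
      thus ?thesis by blast
    qed (use I4 that a'_def in auto)
    show ?thesis unfolding eq cp_inv_def using J0 J1 J2 J3 J4 by auto
  qed
qed


lemma coalition_of_eq:
  assumes disj: "\<forall>S\<in>\<C>. \<forall>T\<in>\<C>. S \<noteq> T \<longrightarrow> S \<inter> T = {}" and "S \<in> \<C>" "i \<in> S"
  shows "coalition_of \<C> i = S"
proof -
  have "(THE S. S \<in> \<C> \<and> i \<in> S) = S"
    by (rule the_equality) (use assms in blast)+
  thus ?thesis using assms unfolding coalition_of_def by auto
qed

lemma coalition_of_cases:
  assumes disj: "\<forall>S\<in>\<C>. \<forall>T\<in>\<C>. S \<noteq> T \<longrightarrow> S \<inter> T = {}"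
  shows "coalition_of \<C> i = {} \<or> (\<exists>S\<in>\<C>. i \<in> S \<and> coalition_of \<C> i = S)"
proof (cases "\<exists>S\<in>\<C>. i \<in> S")
  case True
  then obtain S where "S \<in> \<C>" "i \<in> S" by blast
  thus ?thesis using coalition_of_eq[OF disj] by blast
next
  case False thus ?thesis unfolding coalition_of_def by simp
qed

lemma inv_init:
  assumes "(a, \<C>) \<in> feasible_states N v" and "\<forall>i\<in>N. \<exists>k::int. a i = of_int k * \<delta>"
  shows "cp_inv N v \<delta> (a, coalition_of \<C>)"
proof -
  have sub: "\<forall>S\<in>\<C>. S \<subseteq> N" and disj: "\<forall>S\<in>\<C>. \<forall>T\<in>\<C>. S \<noteq> T \<longrightarrow> S \<inter> T = {}"
    and le: "\<forall>S\<in>\<C>. (\<Sum>i\<in>S. a i) \<le> v S"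
    using assms(1) by (simp_all add: feasible_states_def)
  have c: "coalition_of \<C> k = {} \<or> (\<exists>S\<in>\<C>. k \<in> S \<and> coalition_of \<C> k = S)" for k
    by (rule coalition_of_cases[OF disj])
  have J0: "coalition_of \<C> k \<subseteq> N" for k using c[of k] sub by auto
  have J1: "coalition_of \<C> k \<noteq> {} \<Longrightarrow> k \<in> coalition_of \<C> k" for k using c[of k] by auto
  have J2: "coalition_of \<C> k = coalition_of \<C> j" if kj: "k \<in> coalition_of \<C> j" for j k
  proof -
    obtain S where "S \<in> \<C>" "coalition_of \<C> j = S" using c[of j] kj by (metis empty_iff)
    thus ?thesis using coalition_of_eq[OF disj, of S k] that by auto
  qed
  have J3: "(\<Sum>x\<in>coalition_of \<C> k. a x) \<le> v (coalition_of \<C> k)" if ne: "coalition_of \<C> k \<noteq> {}" for k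
  proof -
    obtain S where "S \<in> \<C>" "coalition_of \<C> k = S" using c[of k] ne by (metis)
    thus ?thesis using le by simp
  qed
  show ?thesis unfolding cp_inv_def fst_conv snd_conv using J0 J1 J2 J3 assms(2) by blast
qed

lemma inv_reach:
  assumes fin: "finite N" and vm: "\<forall>S. S \<subseteq> N \<longrightarrow> (\<exists>k::int. v S = of_int k * \<delta>)"
  shows "(cp_move N v \<delta>)\<^sup>*\<^sup>* s0 s \<Longrightarrow> cp_inv N v \<delta> s0 \<Longrightarrow> cp_inv N v \<delta> s"
proof (induction rule: rtranclp_induct)
  case base thus ?case .
next
  case (step y z)
  then obtain i S where "i \<in> N" "S \<subseteq> N - {i}" "z = cp_step v \<delta> y i S"
    unfolding cp_move_def by auto
  thus ?case using inv_step[OF fin vm, of "fst y" "snd y" i S] step by simp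
qed

lemma absorbing_core:
  assumes fin: "finite N" and v0: "v {} = 0" and d: "\<delta> > 0"
    and vm: "\<forall>S. S \<subseteq> N \<longrightarrow> (\<exists>k::int. v S = of_int k * \<delta>)"
    and inv: "cp_inv N v \<delta> (a, C)" and abs: "cp_absorbing N v \<delta> (a, C)"
  shows "core_solutions N v \<noteq> {}"
proof -
  have I0: "\<And>k. C k \<subseteq> N" and I1: "\<And>k. C k \<noteq> {} \<Longrightarrow> k \<in> C k"
    and I2: "\<And>j k. k \<in> C j \<Longrightarrow> C k = C j"
    and I3: "\<And>k. C k \<noteq> {} \<Longrightarrow> (\<Sum>x\<in>C k. a x) \<le> v (C k)"
    and I4: "\<forall>i\<in>N. \<exists>m::int. a i = of_int m * \<delta>"
    using inv unfolding cp_inv_def by auto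
  have fixa: "fst (cp_step v \<delta> (a, C) i S) i = a i" if "i \<in> N" "S \<subseteq> N - {i}" for i S
  proof -
    have "cp_move N v \<delta> (a, C) (cp_step v \<delta> (a, C) i S)" unfolding cp_move_def using that by blast
    hence "env_state N (cp_step v \<delta> (a, C) i S) = env_state N (a, C)"
      using abs unfolding cp_absorbing_def by blast
    hence "restrict (fst (cp_step v \<delta> (a, C) i S)) N = restrict a N"
      unfolding env_state_def by simp
    hence "restrict (fst (cp_step v \<delta> (a, C) i S)) N i = restrict a N i" by simp
    thus ?thesis using that(1) by simp
  qed
  have nosucc: "\<not> (\<Sum>j\<in>insert i S. a j) + \<delta> \<le> v (insert i S)" if "i \<in> N" "S \<subseteq> N - {i}" for i S
  proof
    assume "(\<Sum>j\<in>insert i S. a j) + \<delta> \<le> v (insert i S)"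
    hence "fst (cp_step v \<delta> (a, C) i S) i = a i + \<delta>" using step_succ(1)[of a i S \<delta> v C] by simp
    thus False using fixa[OF that] d by simp
  qed
  obtain mf where mf: "\<forall>i\<in>N. a i = of_int (mf i) * \<delta>" using I4 by metis
  have coreineq: "(\<Sum>j\<in>T. a j) \<ge> v T" if T: "T \<subseteq> N" for T
  proof (cases "T = {}")
    case True thus ?thesis using v0 by simp
  next
    case False
    then obtain i where iT: "i \<in> T" by auto
    have TT: "insert i (T - {i}) = T" using iT by auto
    have ns: "\<not> (\<Sum>j\<in>T. a j) + \<delta> \<le> v T" using nosucc[of i "T - {i}"] iT T TT by auto
    have "(\<Sum>j\<in>T. a j) = (\<Sum>j\<in>T. of_int (mf j) * \<delta>)" using mf T by (auto intro: sum.cong)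
    also have "\<dots> = of_int (\<Sum>j\<in>T. mf j) * \<delta>" by (simp add: sum_distrib_right)
    finally have sm: "(\<Sum>j\<in>T. a j) = of_int (\<Sum>j\<in>T. mf j) * \<delta>" .
    obtain n where n: "v T = of_int n * \<delta>" using vm T by blast
    have "of_int n * \<delta> < (of_int (\<Sum>j\<in>T. mf j) + 1) * \<delta>" using ns sm n by (simp add: algebra_simps)
    hence "real_of_int n < of_int (\<Sum>j\<in>T. mf j) + 1" using d by (simp add: mult_less_cancel_right)
    hence "n \<le> (\<Sum>j\<in>T. mf j)" by linarith
    hence "of_int n * \<delta> \<le> of_int (\<Sum>j\<in>T. mf j) * \<delta>" using d by (simp del: of_int_sum add: mult_right_mono)
    thus ?thesis using sm n by simp
  qed
  have single: "a i = v {i}" if "i \<in> N" "C i = {}" for i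
  proof -
    have ns: "\<not> (\<Sum>j\<in>insert i {}. a j) + \<delta> \<le> v (insert i {})" using nosucc[of i "{}"] that by auto
    have "fst (cp_step v \<delta> (a, C) i {}) i = max (v {i}) (a i - \<delta>)"
      using step_fail[of a i "{}" \<delta> v C] ns that by (simp add: Let_def)
    hence "max (v {i}) (a i - \<delta>) = a i" using fixa[of i "{}"] that by simp
    thus ?thesis using d by (auto simp: max_def split: if_splits)
  qed
  define \<rho> where "\<rho> = {C i | i. i \<in> N \<and> C i \<noteq> {}} \<union> {{i} | i. i \<in> N \<and> C i = {}}"
  have part: "is_partition N \<rho>"
    unfolding is_partition_def
  proof (intro conjI)
    show "\<forall>S\<in>\<rho>. S \<noteq> {} \<and> S \<subseteq> N" unfolding \<rho>_def using I0 by auto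
    show "\<Union>\<rho> = N"
    proof
      show "\<Union>\<rho> \<subseteq> N" unfolding \<rho>_def using I0 by auto
      show "N \<subseteq> \<Union>\<rho>"
      proof
        fix i assume "i \<in> N"
        show "i \<in> \<Union>\<rho>"
        proof (cases "C i = {}")
          case True
          hence "{i} \<in> \<rho>" unfolding \<rho>_def using \<open>i \<in> N\<close> by blast
          thus ?thesis by blast
        next
          case False
          hence "C i \<in> \<rho>" unfolding \<rho>_def using \<open>i \<in> N\<close> by blast
          thus ?thesis using I1[OF False] by blast
        qed
      qed
    qed
    have canon: "U = (if C k = {} then {k} else C k)" if "U \<in> \<rho>" "k \<in> U" for U k
    proof -
      from that(1) consider i where "i \<in> N" "C i \<noteq> {}" "U = C i" | i where "i \<in> N" "C i = {}" "U = {i}"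
        unfolding \<rho>_def by auto
      thus ?thesis
      proof cases
        case 1 thus ?thesis using I2[of k i] that(2) by auto
      next
        case 2 thus ?thesis using that(2) by auto
      qed
    qed
    show "\<forall>S\<in>\<rho>. \<forall>T\<in>\<rho>. S \<noteq> T \<longrightarrow> S \<inter> T = {}"
    proof (intro ballI impI)
      fix S T assume "S \<in> \<rho>" "T \<in> \<rho>" "S \<noteq> T"
      show "S \<inter> T = {}"
      proof (rule ccontr)
        assume "S \<inter> T \<noteq> {}"
        then obtain k where "k \<in> S" "k \<in> T" by blast
        have "S = (if C k = {} then {k} else C k)" using canon[OF \<open>S \<in> \<rho>\<close> \<open>k \<in> S\<close>] .
        moreover have "T = (if C k = {} then {k} else C k)" using canon[OF \<open>T \<in> \<rho>\<close> \<open>k \<in> T\<close>] .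
        ultimately show False using \<open>S \<noteq> T\<close> by simp
      qed
    qed
  qed
  have eqs: "\<forall>S\<in>\<rho>. (\<Sum>i\<in>S. restrict a N i) = v S"
  proof
    fix S assume "S \<in> \<rho>"
    then consider i where "i \<in> N" "C i \<noteq> {}" "S = C i" | i where "i \<in> N" "C i = {}" "S = {i}"
      unfolding \<rho>_def by auto
    thus "(\<Sum>i\<in>S. restrict a N i) = v S"
    proof cases
      case 1
      have SN: "S \<subseteq> N" using I0 1 by auto
      have "(\<Sum>i\<in>S. restrict a N i) = (\<Sum>i\<in>S. a i)" using SN by (simp add: restrict_def subset_iff)
      moreover have "(\<Sum>i\<in>S. a i) \<le> v S" using I3[of i] 1 by simp
      moreover have "(\<Sum>i\<in>S. a i) \<ge> v S" using coreineq[OF SN] .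
      ultimately show ?thesis by linarith
    next
      case 2 thus ?thesis using single by simp
    qed
  qed
  have ineq: "\<forall>S. S \<subseteq> N \<longrightarrow> (\<Sum>i\<in>S. restrict a N i) \<ge> v S"
  proof (intro allI impI)
    fix S assume S: "S \<subseteq> N"
    have "(\<Sum>i\<in>S. restrict a N i) = (\<Sum>i\<in>S. a i)" using S by (simp add: restrict_def subset_iff)
    thus "(\<Sum>i\<in>S. restrict a N i) \<ge> v S" using coreineq[OF S] by simp
  qed
  have "(restrict a N, \<rho>) \<in> core_solutions N v"
  proof -
    have "restrict a N \<in> N \<rightarrow>\<^sub>E UNIV" by simp
    thus ?thesis unfolding core_solutions_def using part eqs ineq by blast
  qed
  thus ?thesis by blast
qed

theorem proposition4:
  fixes N :: "'a set" and v :: "'a set \<Rightarrow> real" and \<delta> :: real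
    and a :: "'a \<Rightarrow> real" and \<C> :: "'a set set"
  assumes "finite N"
    and "v {} = 0"
    and "core_solutions N v = {}"
    and "\<delta> > 0"
    and "\<forall>S. S \<subseteq> N \<longrightarrow> (\<exists>k::int. v S = of_int k * \<delta>)"
    and "(a, \<C>) \<in> feasible_states N v"
    and "\<forall>i\<in>N. \<exists>k::int. a i = of_int k * \<delta>"
  shows "\<forall>s. (cp_move N v \<delta>)\<^sup>*\<^sup>* (a, coalition_of \<C>) s \<longrightarrow> \<not> cp_absorbing N v \<delta> s"
proof (intro allI impI notI)
  fix s assume r: "(cp_move N v \<delta>)\<^sup>*\<^sup>* (a, coalition_of \<C>) s" and ab: "cp_absorbing N v \<delta> s"
  have "cp_inv N v \<delta> s" using inv_reach[OF assms(1,5) r inv_init[OF assms(6,7)]] .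
  hence "core_solutions N v \<noteq> {}"
    using absorbing_core[OF assms(1,2,4,5), of "fst s" "snd s"] ab by simp
  thus False using assms(3) by simp
qed
end
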